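(* Let $\odot$ be a non-degenerate pseudo-multiplication, and let $\tau$ be a $\sigma$-maxitive measure on a $\sigma$-algebra $\mathcal{B}$ of subsets of a nonempty set $E$. Then $\tau$ has the Radon–Nikodym property with respect to the idempotent $\odot$-integral if and only if $\tau$ is $\sigma$-$\odot$-finite and $\sigma$-principal.
   Context: Write $\overline{\mathbb{R}}_+=[0,\infty]$ and $\oplus$ for the supremum. A pseudo-multiplication is a binary operation $\odot$ on $\overline{\mathbb{R}}_+$ with the following properties: - it is associative; - it is continuous on $(0,\infty)\times[0,\infty]$; - for every $t$, the map $s\mapsto s\odot t$ is continuous on $(0,\infty]$; - it is nondecreasing in each argument; - it has a left identity $1_\odot$, i.e. $1_\odot\odot t=t$ for all $t$; - it has no zero divisors, i.e. $s\odot t=0$ implies $s=0$ or $t=0$; - $0\odot t=t\odot 0=0$ for all $t$. Put $O(t)=\inf_{s>0}s\odot t$. An element $t$ is $\odot$-finite if $O(t)=0$, and $\odot$-infinite otherwise. The operation $\odot$ is non-degenerate if $1_\odot$ is $\odot$-finite. Let $\mathcal{B}$ be a $\sigma$-algebra on $E$. A $\sigma$-ideal of $\mathcal{B}$ is a nonempty $\mathcal{I}\subset\mathcal{B}$ that is closed under countable unions and satisfies: $A\subset B\in\mathcal{I}$ with $A\in\mathcal{B}$ implies $A\in\mathcal{I}$. A $\sigma$-maxitive measure on $\mathcal{B}$ is a map $\nu:\mathcal{B}\to\overline{\mathbb{R}}_+$ with $\nu(\emptyset)=0$ and $\nu(\bigcup_{j\in J}B_j)=\sup_{j\in J}\nu(B_j)$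 for every countable family $(B_j)_{j\in J}$ in $\mathcal{B}$. A set $N\subset E$ is $\tau$-negligible if $N\subset B$ for some $B\in\mathcal{B}$ with $\tau(B)=0$. A map $f:E\to\overline{\mathbb{R}}_+$ is $\mathcal{B}$-measurable if $\{f>t\}\in\mathcal{B}$ for all $t\in[0,\infty)$. The idempotent $\odot$-integral of such $f$ over $B\in\mathcal{B}$ is $\int^\infty_B f\odot d\nu=\sup_{t\in[0,\infty)} t\odot\nu(B\cap\{f>t\})$. Let $\nu,\tau$ be $\sigma$-maxitive measures on $\mathcal{B}$. - $\nu$ has a density with respect to $\tau$ if there is a $\mathcal{B}$-measurable $c:E\to\overline{\mathbb{R}}_+$ with $\nu(B)=\int^\infty_B c\odot d\tau$ for all $B\in\mathcal{B}$. - $\nu$ is $\odot$-absolutely continuous with respect to $\tau$, written $\nu\ll_\odot\tau$, if $\nu(B)\le\infty\odot\tau(B)$ for every $B\in\mathcal{B}$ such that $\tau(B)$ is $\odot$-finite. - $\tau$ has the Radon–Nikodym property (with respect to the idempotent $\odot$-integral) if every $\sigma$-maxitive measure $\nu$ on $\mathcal{B}$ with $\nu\ll_\odot\tau$ has a density with respect to $\tau$. - $\tau$ is $\sigma$-$\odot$-finite if there is a countable family $(B_n)$ in $\mathcal{B}$ covering $E$ with each $\tau(B_n)$ $\odot$-finite. - $\tau$ is $\sigma$-principal if for every $\sigma$-ideal $\mathcal{I}$ of $\mathcal{B}$ there is $L\in\mathcal{I}$ such that $S\setminus L$ is $\tau$-negligible for all $S\in\mathcal{I}$. *)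

theory Defs
  imports "HOL-Analysis.Analysis"
begin

definition pseudo_mult :: "(ennreal \<Rightarrow> ennreal \<Rightarrow> ennreal) \<Rightarrow> ennreal \<Rightarrow> bool" where
  "pseudo_mult odot one \<longleftrightarrow>
     (\<forall>a b c. odot (odot a b) c = odot a (odot b c)) \<and>
     continuous_on ({0<..<top} \<times> UNIV) (\<lambda>(s, t). odot s t) \<and>
     (\<forall>t. continuous_on {0<..} (\<lambda>s. odot s t)) \<and>
     (\<forall>a b c. a \<le> b \<longrightarrow> odot a c \<le> odot b c \<and> odot c a \<le> odot c b) \<and>
     (\<forall>t. odot one t = t) \<and>
     (\<forall>s t. odot s t = 0 \<longrightarrow> s = 0 \<or> t = 0) \<and>
     (\<forall>t. odot 0 t = 0 \<and> odot t 0 = 0)"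

definition O_odot :: "(ennreal \<Rightarrow> ennreal \<Rightarrow> ennreal) \<Rightarrow> ennreal \<Rightarrow> ennreal" where
  "O_odot odot t = (INF s\<in>{0<..}. odot s t)"

definition odot_finite :: "(ennreal \<Rightarrow> ennreal \<Rightarrow> ennreal) \<Rightarrow> ennreal \<Rightarrow> bool" where
  "odot_finite odot t \<longleftrightarrow> O_odot odot t = 0"

definition non_degenerate :: "(ennreal \<Rightarrow> ennreal \<Rightarrow> ennreal) \<Rightarrow> ennreal \<Rightarrow> bool" where
  "non_degenerate odot one \<longleftrightarrow> odot_finite odot one"

definition sigma_ideal :: "'a set set \<Rightarrow> 'a set set \<Rightarrow> bool" where
  "sigma_ideal B I \<longleftrightarrow> I \<noteq> {} \<and> I \<subseteq> B \<and>
     (\<forall>F. countable F \<and> F \<subseteq> I \<longrightarrow> \<Union>F \<in> I) \<and>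
     (\<forall>A S. A \<in> B \<and> S \<in> I \<and> A \<subseteq> S \<longrightarrow> A \<in> I)"

definition sigma_maxitive :: "'a set set \<Rightarrow> ('a set \<Rightarrow> ennreal) \<Rightarrow> bool" where
  "sigma_maxitive B nu \<longleftrightarrow> nu {} = 0 \<and>
     (\<forall>F. countable F \<and> F \<subseteq> B \<longrightarrow> nu (\<Union>F) = (SUP A\<in>F. nu A))"

definition negligible :: "'a set set \<Rightarrow> ('a set \<Rightarrow> ennreal) \<Rightarrow> 'a set \<Rightarrow> bool" where
  "negligible B tau N \<longleftrightarrow> (\<exists>A\<in>B. N \<subseteq> A \<and> tau A = 0)"

definition B_measurable :: "'a set \<Rightarrow> 'a set set \<Rightarrow> ('a \<Rightarrow> ennreal) \<Rightarrow> bool" where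
  "B_measurable E B f \<longleftrightarrow> (\<forall>t. t < top \<longrightarrow> {x\<in>E. t < f x} \<in> B)"

definition idem_integral ::
  "(ennreal \<Rightarrow> ennreal \<Rightarrow> ennreal) \<Rightarrow> 'a set \<Rightarrow> ('a \<Rightarrow> ennreal) \<Rightarrow> ('a set \<Rightarrow> ennreal) \<Rightarrow> 'a set \<Rightarrow> ennreal" where
  "idem_integral odot E f nu A = (SUP t\<in>{t. t < top}. odot t (nu (A \<inter> {x\<in>E. t < f x})))"

definition has_density ::
  "(ennreal \<Rightarrow> ennreal \<Rightarrow> ennreal) \<Rightarrow> 'a set \<Rightarrow> 'a set set \<Rightarrow> ('a set \<Rightarrow> ennreal) \<Rightarrow> ('a set \<Rightarrow> ennreal) \<Rightarrow> bool" where
  "has_density odot E B nu tau \<longleftrightarrow>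
     (\<exists>c. B_measurable E B c \<and> (\<forall>A\<in>B. nu A = idem_integral odot E c tau A))"

definition odot_abs_cont ::
  "(ennreal \<Rightarrow> ennreal \<Rightarrow> ennreal) \<Rightarrow> 'a set set \<Rightarrow> ('a set \<Rightarrow> ennreal) \<Rightarrow> ('a set \<Rightarrow> ennreal) \<Rightarrow> bool" where
  "odot_abs_cont odot B nu tau \<longleftrightarrow>
     (\<forall>A\<in>B. odot_finite odot (tau A) \<longrightarrow> nu A \<le> odot top (tau A))"

definition radon_nikodym_property ::
  "(ennreal \<Rightarrow> ennreal \<Rightarrow> ennreal) \<Rightarrow> 'a set \<Rightarrow> 'a set set \<Rightarrow> ('a set \<Rightarrow> ennreal) \<Rightarrow> bool" where
  "radon_nikodym_property odot E B tau \<longleftrightarrow>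
     (\<forall>nu. sigma_maxitive B nu \<and> odot_abs_cont odot B nu tau \<longrightarrow> has_density odot E B nu tau)"

definition sigma_odot_finite ::
  "(ennreal \<Rightarrow> ennreal \<Rightarrow> ennreal) \<Rightarrow> 'a set \<Rightarrow> 'a set set \<Rightarrow> ('a set \<Rightarrow> ennreal) \<Rightarrow> bool" where
  "sigma_odot_finite odot E B tau \<longleftrightarrow>
     (\<exists>F. countable F \<and> F \<subseteq> B \<and> \<Union>F = E \<and> (\<forall>A\<in>F. odot_finite odot (tau A)))"

definition sigma_principal :: "'a set set \<Rightarrow> ('a set \<Rightarrow> ennreal) \<Rightarrow> bool" where
  "sigma_principal B tau \<longleftrightarrow>
     (\<forall>I. sigma_ideal B I \<longrightarrow> (\<exists>L\<in>I. \<forall>S\<in>I. negligible B tau (S - L)))"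

end

theory Submission
  imports Defs
begin



context
  fixes odot :: "ennreal \<Rightarrow> ennreal \<Rightarrow> ennreal" and one :: ennreal
  assumes pm: "pseudo_mult odot one"
begin

lemma pm_c: "(\<forall>a b c. odot (odot a b) c = odot a (odot b c)) \<and>
     continuous_on ({0<..<top} \<times> UNIV) (\<lambda>(s, t). odot s t) \<and>
     (\<forall>t. continuous_on {0<..} (\<lambda>s. odot s t)) \<and>
     (\<forall>a b c. a \<le> b \<longrightarrow> odot a c \<le> odot b c \<and> odot c a \<le> odot c b) \<and>
     (\<forall>t. odot one t = t) \<and>
     (\<forall>s t. odot s t = 0 \<longrightarrow> s = 0 \<or> t = 0) \<and>
     (\<forall>t. odot 0 t = 0 \<and> odot t 0 = 0)"
  using pm unfolding pseudo_mult_def by assumption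

lemma pm_assoc: "odot (odot a b) c = odot a (odot b c)"
  using pm_c by (elim conjE) (erule allE)+
lemma pm_jcont: "continuous_on ({0<..<top} \<times> UNIV) (\<lambda>(s, t). odot s t)"
  using pm_c by (elim conjE)
lemma pm_cont1': "continuous_on {0<..} (\<lambda>s. odot s t)"
  using pm_c by (elim conjE) (erule allE)
lemma pm_mono': "a \<le> b \<Longrightarrow> odot a c \<le> odot b c \<and> odot c a \<le> odot c b"
  using pm_c[THEN conjunct2, THEN conjunct2, THEN conjunct2, THEN conjunct1] by blast
lemma pm_mono1: "a \<le> b \<Longrightarrow> odot a c \<le> odot b c"
  using pm_mono' by blast
lemma pm_mono2: "a \<le> b \<Longrightarrow> odot c a \<le> odot c b"
  using pm_mono' by blast
lemma pm_one[simp]: "odot one t = t"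
  using pm_c by (elim conjE) (erule allE)
lemma pm_nz: "odot s t = 0 \<Longrightarrow> s = 0 \<or> t = 0"
  using pm_c[THEN conjunct2, THEN conjunct2, THEN conjunct2, THEN conjunct2, THEN conjunct2, THEN conjunct1] by blast
lemma pm_zero': "odot 0 t = 0 \<and> odot t 0 = 0"
  using pm_c by (elim conjE) (erule allE)
lemma pm_zero1[simp]: "odot 0 t = 0"
  using pm_zero' by blast
lemma pm_zero2[simp]: "odot t 0 = 0"
  using pm_zero' by blast
lemma pm_mono: "a \<le> b \<Longrightarrow> c \<le> d \<Longrightarrow> odot a c \<le> odot b d"
  by (meson order_trans pm_mono1 pm_mono2)
lemma one_pos: "0 < one"
proof (rule ccontr)
  assume "\<not> 0 < one" then have "one = 0" by simp
  then have "odot one 1 = 0" by simp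
  moreover have "odot one 1 = 1" by (rule pm_one)
  ultimately show False by simp
qed

lemma pm_cont1: "0 < a \<Longrightarrow> isCont (\<lambda>s. odot s y) a"
proof -
  assume a: "0 < a"
  have "continuous_on {0<..} (\<lambda>s. odot s y)" by (rule pm_cont1')
  then have "\<forall>x\<in>{0<..}. isCont (\<lambda>s. odot s y) x"
    using continuous_on_eq_continuous_at[OF open_greaterThan] by blast
  then show ?thesis using a by simp
qed

lemma pm_cont2: "0 < q \<Longrightarrow> q < top \<Longrightarrow> isCont (\<lambda>y. odot q y) y"
proof -
  assume q: "0 < q" "q < top"
  have c: "continuous_on ({0<..<top} \<times> UNIV) (\<lambda>(s, t). odot s t)" by (rule pm_jcont)
  have "continuous_on UNIV (\<lambda>y. (\<lambda>(s, t). odot s t) (q, y))"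
    by (rule continuous_on_compose2[OF c]) (auto intro!: continuous_intros simp: q)
  then show ?thesis by (simp add: continuous_on_eq_continuous_at)
qed

lemma top_mult_ge: "t \<le> odot top t"
  using pm_mono1[of one top t] by simp

lemma left_bound1:
  assumes a: "0 < a" and le: "\<And>t. t < a \<Longrightarrow> 0 < t \<Longrightarrow> odot t y \<le> R"
  shows "odot a y \<le> R"
proof (rule ccontr)
  assume "\<not> ?thesis" then have Ra: "R < odot a y" by simp
  have "((\<lambda>s. odot s y) \<longlongrightarrow> odot a y) (at a)"
    using pm_cont1[OF a] by (simp add: isCont_def)
  then have "((\<lambda>s. odot s y) \<longlongrightarrow> odot a y) (at_left a)"
    by (rule tendsto_within_subset) simp
  from order_tendstoD(1)[OF this Ra] have "eventually (\<lambda>s. R < odot s y) (at_left a)" .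
  then have "\<exists>b<a. \<forall>s>b. s < a \<longrightarrow> R < odot s y"
    by (subst (asm) eventually_at_left[OF a])
  then obtain b where b: "b < a" "\<And>s. b < s \<Longrightarrow> s < a \<Longrightarrow> R < odot s y"
    by blast
  obtain s where s: "b < s" "s < a" using dense[OF b(1)] by blast
  have "0 < s" using s(1) by (metis not_gr_zero not_less_zero)
  then show False using b(2)[OF s] leD[OF le[OF s(2) \<open>0 < s\<close>]] by blast
qed

lemma left_bound2:
  assumes q: "0 < q" "q < top" and le: "\<And>y. y < a \<Longrightarrow> odot q y \<le> R"
  shows "odot q a \<le> R"
proof (cases "a = 0")
  case True then show ?thesis by simp
next
  case False
  then have a: "0 < a" by (simp add: zero_less_iff_neq_zero)
  show ?thesis
  proof (rule ccontr)
    assume "\<not> ?thesis" then have Ra: "R < odot q a" by simp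
    have "((\<lambda>s. odot q s) \<longlongrightarrow> odot q a) (at a)"
      using pm_cont2[OF q] by (simp add: isCont_def)
    then have "((\<lambda>s. odot q s) \<longlongrightarrow> odot q a) (at_left a)"
      by (rule tendsto_within_subset) simp
    from order_tendstoD(1)[OF this Ra] have "eventually (\<lambda>s. R < odot q s) (at_left a)" .
    then have "\<exists>b<a. \<forall>s>b. s < a \<longrightarrow> R < odot q s"
      by (subst (asm) eventually_at_left[OF a])
    then obtain b where b: "b < a" "\<And>s. b < s \<Longrightarrow> s < a \<Longrightarrow> R < odot q s"
      by blast
    obtain s where s: "b < s" "s < a" using dense[OF b(1)] by blast
    then show False using b(2)[OF s] leD[OF le[OF s(2)]] by blast
  qed
qed

end



context
  fixes E :: "'a set" and B :: "'a set set"
  assumes sa: "sigma_algebra E B"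
begin

lemma sB_sub: assumes "A \<in> B" shows "A \<subseteq> E"
proof -
  interpret sigma_algebra E B by (rule sa)
  show ?thesis using assms by (rule sets_into_space)
qed
lemma sB_Un: assumes "A \<in> B" "C \<in> B" shows "A \<union> C \<in> B"
proof -
  interpret sigma_algebra E B by (rule sa)
  show ?thesis using assms by (rule Un)
qed
lemma sB_Int: assumes "A \<in> B" "C \<in> B" shows "A \<inter> C \<in> B"
proof -
  interpret sigma_algebra E B by (rule sa)
  show ?thesis using assms by (rule Int)
qed
lemma sB_Diff: assumes "A \<in> B" "C \<in> B" shows "A - C \<in> B"
proof -
  interpret sigma_algebra E B by (rule sa)
  show ?thesis using assms by (rule Diff)
qed
lemma sB_empty:  shows "{} \<in> B"
proof -
  interpret sigma_algebra E B by (rule sa)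
  show ?thesis by (rule empty_sets)
qed
lemma sB_top:  shows "E \<in> B"
proof -
  interpret sigma_algebra E B by (rule sa)
  show ?thesis by (rule top)
qed
lemma sB_Union: "countable F \<Longrightarrow> F \<subseteq> B \<Longrightarrow> \<Union>F \<in> B"
  by (rule sigma_algebra.countable_Union[OF sa])
lemma sB_UN: assumes "countable I" "\<And>i. i \<in> I \<Longrightarrow> A i \<in> B" shows "(\<Union>i\<in>I. A i) \<in> B"
proof (rule sB_Union)
  show "countable (A ` I)" using assms(1) by simp
  show "A ` I \<subseteq> B" using assms(2) by blast
qed

context
  fixes mu :: "'a set \<Rightarrow> ennreal"
  assumes mx: "sigma_maxitive B mu"
begin

lemma mx_empty[simp]: "mu {} = 0"
  using mx unfolding sigma_maxitive_def by blast
lemma mx_Sup: "countable F \<Longrightarrow> F \<subseteq> B \<Longrightarrow> mu (\<Union>F) = Sup (mu ` F)"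
  using mx unfolding sigma_maxitive_def by blast
lemma mx_UN: "countable I \<Longrightarrow> (\<And>i. i \<in> I \<Longrightarrow> A i \<in> B) \<Longrightarrow> mu (\<Union>i\<in>I. A i) = (SUP i\<in>I. mu (A i))"
proof -
  assume I: "countable I" "\<And>i. i \<in> I \<Longrightarrow> A i \<in> B"
  have "mu (\<Union>(A ` I)) = Sup (mu ` (A ` I))" by (rule mx_Sup) (use I in auto)
  then show ?thesis by (simp add: image_comp)
qed
lemma mx_Un: "A \<in> B \<Longrightarrow> C \<in> B \<Longrightarrow> mu (A \<union> C) = max (mu A) (mu C)"
proof -
  assume "A \<in> B" "C \<in> B"
  then have "mu (\<Union>{A, C}) = Sup (mu ` {A, C})" by (intro mx_Sup) auto
  moreover have "Sup (mu ` {A, C}) = sup (mu A) (mu C)" by simp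
  moreover have "\<Union>{A, C} = A \<union> C" by simp
  ultimately show ?thesis by (metis sup_max)
qed
lemma mx_mono: "A \<in> B \<Longrightarrow> C \<in> B \<Longrightarrow> A \<subseteq> C \<Longrightarrow> mu A \<le> mu C"
proof -
  assume "A \<in> B" "C \<in> B" "A \<subseteq> C"
  then have "mu C = mu (A \<union> C)" by (simp add: sup.absorb2)
  also have "\<dots> = max (mu A) (mu C)" using \<open>A \<in> B\<close> \<open>C \<in> B\<close> by (rule mx_Un)
  finally show ?thesis by (metis max.cobounded1)
qed
lemma negl_zero: "negligible B mu N \<Longrightarrow> N \<in> B \<Longrightarrow> mu N = 0"
proof -
  assume "negligible B mu N" "N \<in> B"
  then obtain X where X: "X \<in> B" "N \<subseteq> X" "mu X = 0" unfolding negligible_def by blast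
  have "mu N \<le> mu X" by (rule mx_mono[OF \<open>N \<in> B\<close> X(1) X(2)])
  then show "mu N = 0" using X(3) by simp
qed

end
end



lemma O_zero: "O_odot odot 0 = 0" if pm: "pseudo_mult odot one"
proof -
  have "({0<..} :: ennreal set) \<noteq> {}" by (metis empty_iff greaterThan_iff zero_less_one)
  then show ?thesis unfolding O_odot_def using pm_zero2[OF pm] by simp
qed

lemma fin_zero: "pseudo_mult odot one \<Longrightarrow> odot_finite odot 0"
  unfolding odot_finite_def by (rule O_zero)

lemma fin_down: assumes pm: "pseudo_mult odot one" and f: "odot_finite odot y" and le: "y' \<le> y"
  shows "odot_finite odot y'"
proof -
  have "O_odot odot y' \<le> O_odot odot y"
    unfolding O_odot_def by (rule INF_mono) (use pm_mono2[OF pm le] in blast)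
  then show ?thesis using f unfolding odot_finite_def by simp
qed

lemma ac_null:
  assumes pm: "pseudo_mult odot one" and ac: "odot_abs_cont odot B nu tau"
    and X: "X \<in> B" and t: "tau X = 0"
  shows "nu X = 0"
proof -
  have "nu X \<le> odot top (tau X)" using ac[unfolded odot_abs_cont_def, rule_format, OF X] fin_zero[OF pm] t by simp
  then show ?thesis using t pm_zero2[OF pm] by simp
qed

lemma hahn:
  assumes pm: "pseudo_mult odot one" and sa: "sigma_algebra E B"
    and mt: "sigma_maxitive B tau" and mn: "sigma_maxitive B nu"
    and ac: "odot_abs_cont odot B nu tau" and sp: "sigma_principal B tau"
    and q: "q < top"
  shows "\<exists>L\<in>B. (\<forall>C\<in>B. C \<subseteq> L \<longrightarrow> nu C \<le> odot q (tau C)) \<and>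
                (\<forall>C\<in>B. C \<subseteq> E - L \<longrightarrow> odot q (tau C) \<le> nu C)"
proof -
  define I where "I = {X\<in>B. \<forall>C\<in>B. C \<subseteq> X \<longrightarrow> nu C \<le> odot q (tau C)}"
  have "sigma_ideal B I"
    unfolding sigma_ideal_def
  proof (intro conjI allI impI)
    have "{} \<in> I" unfolding I_def using sB_empty[OF sa] mx_empty[OF sa mn] by auto
    then show "I \<noteq> {}" by blast
    show "I \<subseteq> B" unfolding I_def by blast
  next
    fix F assume F: "countable F \<and> F \<subseteq> I"
    then have FB: "F \<subseteq> B" unfolding I_def by blast
    have "\<Union>F \<in> B" using F FB sB_Union[OF sa] by blast
    moreover have "nu C \<le> odot q (tau C)" if C: "C \<in> B" "C \<subseteq> \<Union>F" for C
    proof -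
      have Ceq: "C = (\<Union>X\<in>F. C \<inter> X)" using C by blast
      have "nu C = nu (\<Union>X\<in>F. C \<inter> X)" using Ceq by (rule arg_cong)
      also have "nu (\<Union>X\<in>F. C \<inter> X) = (SUP X\<in>F. nu (C \<inter> X))"
        using F FB C(1) by (intro mx_UN[OF sa mn]) (auto intro: sB_Int[OF sa])
      also have "\<dots> \<le> odot q (tau C)"
      proof (rule SUP_least)
        fix X assume X: "X \<in> F"
        then have "X \<in> I" "X \<in> B" using F FB by auto
        then have "nu (C \<inter> X) \<le> odot q (tau (C \<inter> X))"
          unfolding I_def using sB_Int[OF sa] C by blast
        also have "\<dots> \<le> odot q (tau C)"
          by (intro pm_mono2[OF pm] mx_mono[OF sa mt]) (use C \<open>X \<in> B\<close> sB_Int[OF sa] in auto)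
        finally show "nu (C \<inter> X) \<le> odot q (tau C)" .
      qed
      finally show ?thesis .
    qed
    ultimately show "\<Union>F \<in> I" unfolding I_def by blast
  next
    fix A S assume "A \<in> B \<and> S \<in> I \<and> A \<subseteq> S"
    then show "A \<in> I" unfolding I_def by auto
  qed
  from sp[unfolded sigma_principal_def, rule_format, OF this]
  obtain L where L: "L \<in> I" "\<And>S. S \<in> I \<Longrightarrow> negligible B tau (S - L)" by blast
  have LB: "L \<in> B" using L unfolding I_def by blast
  have i: "\<forall>C\<in>B. C \<subseteq> L \<longrightarrow> nu C \<le> odot q (tau C)" using L unfolding I_def by blast
  have ii: "odot q (tau C) \<le> nu C" if C: "C \<in> B" "C \<subseteq> E - L" for C
  proof -
    define \<beta> where "\<beta> = nu C"
    define \<alpha> where "\<alpha> = Sup {y. odot q y < \<beta>}"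
    have qa: "odot q \<alpha> \<le> \<beta>"
    proof (cases "q = 0")
      case True then show ?thesis using pm_zero1[OF pm] by simp
    next
      case False
      then have q0: "0 < q" by (simp add: zero_less_iff_neq_zero)
      show ?thesis
      proof (rule left_bound2[OF pm q0 q])
        fix y assume "y < \<alpha>"
        then obtain y' where y': "odot q y' < \<beta>" "y < y'" unfolding \<alpha>_def less_Sup_iff by blast
        have "odot q y \<le> odot q y'" using y'(2) by (intro pm_mono2[OF pm]) simp
        then show "odot q y \<le> \<beta>" using y'(1) by simp
      qed
    qed
    define K where "K = {X\<in>B. tau (X \<inter> C) \<le> \<alpha>}"
    have "sigma_ideal B K"
      unfolding sigma_ideal_def
    proof (intro conjI allI impI)
      have "{} \<in> K" unfolding K_def using sB_empty[OF sa] mx_empty[OF sa mt] by auto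
      then show "K \<noteq> {}" by blast
      show "K \<subseteq> B" unfolding K_def by blast
    next
      fix F assume F: "countable F \<and> F \<subseteq> K"
      then have FB: "F \<subseteq> B" unfolding K_def by blast
      have "\<Union>F \<in> B" using F FB sB_Union[OF sa] by blast
      have Ceq: "\<Union>F \<inter> C = (\<Union>X\<in>F. X \<inter> C)" by blast
      have "tau (\<Union>F \<inter> C) = tau (\<Union>X\<in>F. X \<inter> C)" using Ceq by (rule arg_cong)
      also have "\<dots> = (SUP X\<in>F. tau (X \<inter> C))"
        using F FB C(1) by (intro mx_UN[OF sa mt]) (auto intro: sB_Int[OF sa])
      also have "(SUP X\<in>F. tau (X \<inter> C)) \<le> \<alpha>"
        using F unfolding K_def by (auto intro!: SUP_least)
      finally have "tau (\<Union>F \<inter> C) \<le> \<alpha>" .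
      then show "\<Union>F \<in> K" unfolding K_def using \<open>\<Union>F \<in> B\<close> by blast
    next
      fix A S assume AS: "A \<in> B \<and> S \<in> K \<and> A \<subseteq> S"
      then have AB: "A \<in> B" and SB: "S \<in> B" unfolding K_def by auto
      have "A \<inter> C \<subseteq> S \<inter> C" using AS by blast
      then have "tau (A \<inter> C) \<le> tau (S \<inter> C)"
        by (rule mx_mono[OF sa mt sB_Int[OF sa AB C(1)] sB_Int[OF sa SB C(1)]])
      then show "A \<in> K" using AS unfolding K_def by auto
    qed
    from sp[unfolded sigma_principal_def, rule_format, OF this]
    obtain P where P: "P \<in> K" "\<And>S. S \<in> K \<Longrightarrow> negligible B tau (S - P)" by blast
    have PB: "P \<in> B" using P unfolding K_def by blast
    define C' where "C' = C - P"
    have C'B: "C' \<in> B" unfolding C'_def using sB_Diff[OF sa] C PB by blast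
    have "C' \<in> I" unfolding I_def
    proof (intro CollectI conjI C'B ballI impI)
      fix X assume X: "X \<in> B" "X \<subseteq> C'"
      show "nu X \<le> odot q (tau X)"
      proof (cases "tau X \<le> \<alpha>")
        case True
        have "X \<inter> C = X" using X(2) unfolding C'_def by blast
        then have "X \<in> K" unfolding K_def using X(1) True by simp
        then have "negligible B tau (X - P)" by (rule P(2))
        moreover have "X - P = X" using X C'_def by blast
        ultimately have "tau X = 0" using negl_zero[OF sa mt] X by simp
        then have "nu X = 0" using ac_null[OF pm ac X(1)] by simp
        then show ?thesis by simp
      next
        case False
        then have "tau X \<notin> {y. odot q y < \<beta>}" unfolding \<alpha>_def using Sup_upper[of "tau X" "{y. odot q y < \<beta>}"] by blast
        then have "\<beta> \<le> odot q (tau X)" by simp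
        moreover have "X \<subseteq> C" using X(2) unfolding C'_def by blast
        then have "nu X \<le> nu C" by (rule mx_mono[OF sa mn X(1) C(1)])
        ultimately show ?thesis unfolding \<beta>_def by simp
      qed
    qed
    then have "negligible B tau (C' - L)" by (rule L(2))
    moreover have "C' - L = C'" using C C'_def by blast
    ultimately have tC': "tau C' = 0" using negl_zero[OF sa mt] C'B by simp
    have "C = (P \<inter> C) \<union> C'" unfolding C'_def by blast
    then have "tau C = max (tau (P \<inter> C)) (tau C')"
      using mx_Un[OF sa mt, of "P \<inter> C" C'] sB_Int[OF sa PB C(1)] C'B by simp
    also have "\<dots> \<le> \<alpha>" using P(1) tC' unfolding K_def by simp
    finally have "odot q (tau C) \<le> odot q \<alpha>" by (rule pm_mono2[OF pm])
    then show ?thesis using qa unfolding \<beta>_def by simp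
  qed
  show ?thesis using LB i ii by blast
qed




lemma qv_mono: "r \<le> r' \<Longrightarrow> ennreal (real_of_rat r) \<le> ennreal (real_of_rat r')"
  by (intro ennreal_leI) (simp add: of_rat_less_eq)

lemma qv_lessD: "ennreal (real_of_rat r) < ennreal (real_of_rat r') \<Longrightarrow> r < r'"
  using qv_mono[of r' r] by (metis leD linorder_le_less_linear)

lemma rn_suff:
  assumes pm: "pseudo_mult odot one" and sa: "sigma_algebra E B"
    and mt: "sigma_maxitive B tau" and sf: "sigma_odot_finite odot E B tau"
    and sp: "sigma_principal B tau"
    and mn: "sigma_maxitive B nu" and ac: "odot_abs_cont odot B nu tau"
  shows "has_density odot E B nu tau"
proof -
  define qv :: "rat \<Rightarrow> ennreal" where "qv r = ennreal (real_of_rat r)" for r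
  have qv_top: "qv r < top" for r unfolding qv_def by simp
  have qvm: "r \<le> r' \<Longrightarrow> qv r \<le> qv r'" for r r' unfolding qv_def by (rule qv_mono)
  have qvl: "qv r < qv r' \<Longrightarrow> r < r'" for r r' unfolding qv_def by (rule qv_lessD)
  have "\<forall>r. \<exists>L. L \<in> B \<and> (\<forall>C\<in>B. C \<subseteq> L \<longrightarrow> nu C \<le> odot (qv r) (tau C)) \<and>
                (\<forall>C\<in>B. C \<subseteq> E - L \<longrightarrow> odot (qv r) (tau C) \<le> nu C)"
    using hahn[OF pm sa mt mn ac sp qv_top] by blast
  then obtain L where L: "\<And>r. L r \<in> B"
    "\<And>r C. C \<in> B \<Longrightarrow> C \<subseteq> L r \<Longrightarrow> nu C \<le> odot (qv r) (tau C)"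
    "\<And>r C. C \<in> B \<Longrightarrow> C \<subseteq> E - L r \<Longrightarrow> odot (qv r) (tau C) \<le> nu C"
    by metis
  define L' where "L' r = (\<Union>s\<in>{s. s \<le> r}. L s)" for r
  have L'B: "L' r \<in> B" for r
    unfolding L'_def by (rule sB_UN[OF sa]) (auto intro: L(1) countableI_type)
  have L'm: "r \<le> r' \<Longrightarrow> L' r \<subseteq> L' r'" for r r' unfolding L'_def by (blast intro: order_trans)
  have L'i: "nu C \<le> odot (qv r) (tau C)" if C: "C \<in> B" "C \<subseteq> L' r" for r C
  proof -
    have Ceq: "C = (\<Union>s\<in>{s. s \<le> r}. C \<inter> L s)" using C unfolding L'_def by blast
    have "nu C = nu (\<Union>s\<in>{s. s \<le> r}. C \<inter> L s)" using Ceq by (rule arg_cong)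
    also have "\<dots> = (SUP s\<in>{s. s \<le> r}. nu (C \<inter> L s))"
      by (rule mx_UN[OF sa mn]) (auto intro: countableI_type sB_Int[OF sa C(1) L(1)])
    also have "\<dots> \<le> odot (qv r) (tau C)"
    proof (rule SUP_least)
      fix s assume s: "s \<in> {s. s \<le> r}"
      have "nu (C \<inter> L s) \<le> odot (qv s) (tau (C \<inter> L s))"
        by (rule L(2)) (auto intro: sB_Int[OF sa C(1) L(1)])
      also have "\<dots> \<le> odot (qv r) (tau C)"
        by (intro pm_mono[OF pm] qvm mx_mono[OF sa mt] sB_Int[OF sa C(1) L(1)] C(1)) (use s in auto)
      finally show "nu (C \<inter> L s) \<le> odot (qv r) (tau C)" .
    qed
    finally show ?thesis .
  qed
  have L'ii: "odot (qv r) (tau C) \<le> nu C" if C: "C \<in> B" "C \<subseteq> E - L' r" for r C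
    using C by (intro L(3)) (auto simp: L'_def)
  define c where "c x = Inf (qv ` {r. x \<in> L' r})" for x
  have c_gt: "t < c x \<longleftrightarrow> (\<exists>r. t < qv r \<and> x \<notin> L' r)" for t x
  proof
    assume t: "t < c x"
    then obtain r where r: "t < qv r" "qv r < c x" unfolding qv_def using ennreal_rat_dense by blast
    have "x \<notin> L' r"
    proof
      assume "x \<in> L' r"
      then have "c x \<le> qv r" unfolding c_def by (intro Inf_lower) blast
      then show False using r(2) by simp
    qed
    then show "\<exists>r. t < qv r \<and> x \<notin> L' r" using r(1) by blast
  next
    assume "\<exists>r. t < qv r \<and> x \<notin> L' r"
    then obtain r where r: "t < qv r" "x \<notin> L' r" by blast
    have "qv r \<le> c x" unfolding c_def
    proof (rule Inf_greatest)
      fix y assume "y \<in> qv ` {r. x \<in> L' r}"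
      then obtain s where s: "x \<in> L' s" "y = qv s" by blast
      have "\<not> s \<le> r" using s(1) r(2) L'm by blast
      then show "qv r \<le> y" using s(2) qvm by simp
    qed
    then show "t < c x" using r(1) by simp
  qed
  have cset: "{x\<in>E. t < c x} = (\<Union>r\<in>{r. t < qv r}. E - L' r)" for t
    using c_gt by blast
  have cB: "{x\<in>E. t < c x} \<in> B" for t
    unfolding cset by (rule sB_UN[OF sa]) (auto intro: countableI_type sB_Diff[OF sa sB_top[OF sa] L'B])
  have meas: "B_measurable E B c" unfolding B_measurable_def using cB by blast
  define R where "R A = idem_integral odot E c tau A" for A
  have R_ge: "odot t (tau (A \<inter> {x\<in>E. t < c x})) \<le> R A" if "t < top" for t A
    unfolding R_def idem_integral_def using that by (intro SUP_upper) simp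
  have R_mono: "R A \<le> R A'" if "A \<in> B" "A' \<in> B" "A \<subseteq> A'" for A A'
    unfolding R_def idem_integral_def
  proof (rule SUP_mono)
    fix t :: ennreal assume t: "t \<in> {t. t < top}"
    have "tau (A \<inter> {x\<in>E. t < c x}) \<le> tau (A' \<inter> {x\<in>E. t < c x})"
      by (rule mx_mono[OF sa mt]) (use that cB sB_Int[OF sa] in auto)
    then show "\<exists>t'\<in>{t. t < top}. odot t (tau (A \<inter> {x\<in>E. t < c x})) \<le> odot t' (tau (A' \<inter> {x\<in>E. t' < c x}))"
      using t pm_mono2[OF pm] by blast
  qed
  have step4: "R A \<le> nu A" if A: "A \<in> B" for A
    unfolding R_def idem_integral_def
  proof (rule SUP_least)
    fix t :: ennreal assume t: "t \<in> {t. t < top}"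
    define W where "W = A \<inter> {x\<in>E. t < c x}"
    show "odot t (tau W) \<le> nu A"
    proof (cases "t = 0")
      case True then show ?thesis using pm_zero1[OF pm] by simp
    next
      case False
      then have t0: "0 < t" by (simp add: zero_less_iff_neq_zero)
      have Weq: "W = (\<Union>r\<in>{r. t < qv r}. A - L' r)" unfolding W_def cset using sB_sub[OF sa A] by blast
      have tW: "tau W = (SUP r\<in>{r. t < qv r}. tau (A - L' r))"
      proof -
        have "tau W = tau (\<Union>r\<in>{r. t < qv r}. A - L' r)" using Weq by (rule arg_cong)
        also have "\<dots> = (SUP r\<in>{r. t < qv r}. tau (A - L' r))"
          by (rule mx_UN[OF sa mt]) (auto intro: countableI_type sB_Diff[OF sa A L'B])
        finally show ?thesis .
      qed
      show ?thesis
      proof (rule left_bound2[OF pm t0])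
        show "t < top" using t by simp
        fix y assume "y < tau W"
        then obtain r where r: "t < qv r" "y < tau (A - L' r)" unfolding tW less_SUP_iff by blast
        have "odot t y \<le> odot (qv r) (tau (A - L' r))"
          using r by (intro pm_mono[OF pm]) auto
        also have "\<dots> \<le> nu (A - L' r)"
          by (rule L'ii) (use sB_Diff[OF sa A L'B] sB_sub[OF sa A] in auto)
        also have "\<dots> \<le> nu A" by (rule mx_mono[OF sa mn sB_Diff[OF sa A L'B] A]) blast
        finally show "odot t y \<le> nu A" .
      qed
    qed
  qed
  have step5a: "nu D \<le> R D" if D: "D \<in> B" "odot_finite odot (tau D)" for D
  proof (rule ccontr)
    assume "\<not> nu D \<le> R D"
    then have "R D < nu D" by simp
    then obtain \<rho> where \<rho>: "R D < \<rho>" "\<rho> < nu D" using dense by blast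
    define G where "G = {r. \<rho> < nu (D \<inter> L' r)}"
    have DLB: "D \<inter> L' r \<in> B" for r by (rule sB_Int[OF sa D(1) L'B])
    show False
    proof (cases "G = {}")
      case True
      define U where "U = (\<Union>r\<in>UNIV. L' r)"
      have UB: "U \<in> B" unfolding U_def by (rule sB_UN[OF sa]) (auto intro: countableI_type L'B)
      have 1: "nu (D \<inter> U) \<le> \<rho>"
      proof -
        have "nu (D \<inter> U) = nu (\<Union>r\<in>UNIV. D \<inter> L' r)" unfolding U_def by (rule arg_cong) blast
        also have "\<dots> = (SUP r\<in>UNIV. nu (D \<inter> L' r))"
          by (rule mx_UN[OF sa mn]) (auto intro: countableI_type DLB)
        also have "\<dots> \<le> \<rho>" using True unfolding G_def by (auto intro!: SUP_least simp: not_less)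
        finally show ?thesis .
      qed
      have DUB: "D - U \<in> B" by (rule sB_Diff[OF sa D(1) UB])
      have 2: "nu (D - U) \<le> R D"
      proof -
        have fin: "odot_finite odot (tau (D - U))"
          by (rule fin_down[OF pm D(2)]) (rule mx_mono[OF sa mt DUB D(1)], blast)
        have "nu (D - U) \<le> odot top (tau (D - U))"
          using ac[unfolded odot_abs_cont_def, rule_format, OF DUB fin] .
        also have "\<dots> \<le> R D"
        proof (rule left_bound1[OF pm])
          show "0 < (top::ennreal)" by simp
          fix t :: ennreal assume t: "t < top" "0 < t"
          have sub: "D - U \<subseteq> D \<inter> {x\<in>E. t < c x}"
          proof
            fix x assume x: "x \<in> D - U"
            then have "x \<in> E" using sB_sub[OF sa D(1)] by blast
            moreover have "{r. x \<in> L' r} = {}" using x unfolding U_def by blast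
            then have "c x = top" unfolding c_def by simp
            ultimately show "x \<in> D \<inter> {x\<in>E. t < c x}" using x t by simp
          qed
          have "odot t (tau (D - U)) \<le> odot t (tau (D \<inter> {x\<in>E. t < c x}))"
            by (intro pm_mono2[OF pm] mx_mono[OF sa mt DUB] sub sB_Int[OF sa D(1) cB])
          also have "\<dots> \<le> R D" by (rule R_ge) (rule t(1))
          finally show "odot t (tau (D - U)) \<le> R D" .
        qed
        finally show ?thesis .
      qed
      have "D = (D \<inter> U) \<union> (D - U)" by blast
      then have "nu D = nu ((D \<inter> U) \<union> (D - U))" by (rule arg_cong)
      also have "\<dots> = max (nu (D \<inter> U)) (nu (D - U))"
        by (rule mx_Un[OF sa mn sB_Int[OF sa D(1) UB] DUB])
      also have "\<dots> \<le> \<rho>" using 1 2 \<rho>(1) by simp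
      finally show False using \<rho>(2) by simp
    next
      case False
      then obtain r0 where r0: "r0 \<in> G" by blast
      define a where "a = Inf (qv ` G)"
      have a_le: "r \<in> G \<Longrightarrow> a \<le> qv r" for r unfolding a_def by (rule Inf_lower) blast
      have a_top: "a < top" using a_le[OF r0] qv_top[of r0] by simp
      have notG: "qv r < a \<Longrightarrow> r \<notin> G" for r using a_le by (meson leD)
      show False
      proof (cases "a = 0")
        case True
        have "O_odot odot (tau D) < \<rho>" using D(2) \<rho>(1) unfolding odot_finite_def
          by (metis le_zero_eq not_le zero_le)
        then obtain s where s: "0 < s" "odot s (tau D) < \<rho>"
          unfolding O_odot_def INF_less_iff by auto
        have "Inf (qv ` G) < s" using True s(1) unfolding a_def by simp
        then obtain r where r: "r \<in> G" "qv r < s" unfolding Inf_less_iff by blast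
        have "\<rho> < nu (D \<inter> L' r)" using r(1) unfolding G_def by simp
        also have "\<dots> \<le> odot (qv r) (tau (D \<inter> L' r))" by (rule L'i[OF DLB]) blast
        also have "\<dots> \<le> odot s (tau D)"
          by (intro pm_mono[OF pm] mx_mono[OF sa mt DLB D(1)]) (use r(2) in auto)
        finally show False using s(2) by simp
      next
        case False
        then have a0: "0 < a" by (simp add: zero_less_iff_neq_zero)
        define M where "M = (\<Union>r\<in>{r. qv r < a}. L' r)"
        have MB: "M \<in> B" unfolding M_def by (rule sB_UN[OF sa]) (auto intro: countableI_type L'B)
        have DM: "nu (D \<inter> M) \<le> \<rho>"
        proof -
          have "nu (D \<inter> M) = nu (\<Union>r\<in>{r. qv r < a}. D \<inter> L' r)" unfolding M_def by (rule arg_cong) blast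
          also have "\<dots> = (SUP r\<in>{r. qv r < a}. nu (D \<inter> L' r))"
            by (rule mx_UN[OF sa mn]) (auto intro: countableI_type DLB)
          also have "\<dots> \<le> \<rho>"
          proof (rule SUP_least)
            fix r assume "r \<in> {r. qv r < a}"
            then have "r \<notin> G" using notG by blast
            then show "nu (D \<inter> L' r) \<le> \<rho>" unfolding G_def by (simp add: not_less)
          qed
          finally show ?thesis .
        qed
        define Q where "Q r = D \<inter> L' r - M" for r
        have QB: "Q r \<in> B" for r unfolding Q_def by (rule sB_Diff[OF sa DLB MB])
        have Qgt: "\<rho> < nu (Q r)" if r: "r \<in> G" for r
        proof -
          have "D \<inter> L' r = (D \<inter> L' r \<inter> M) \<union> Q r" unfolding Q_def by blast
          then have "nu (D \<inter> L' r) = nu ((D \<inter> L' r \<inter> M) \<union> Q r)" by (rule arg_cong)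
          also have "\<dots> = max (nu (D \<inter> L' r \<inter> M)) (nu (Q r))"
            by (rule mx_Un[OF sa mn sB_Int[OF sa DLB MB] QB])
          finally have eq: "nu (D \<inter> L' r) = max (nu (D \<inter> L' r \<inter> M)) (nu (Q r))" .
          have "nu (D \<inter> L' r \<inter> M) \<le> nu (D \<inter> M)"
            by (rule mx_mono[OF sa mn sB_Int[OF sa DLB MB] sB_Int[OF sa D(1) MB]]) blast
          then have "nu (D \<inter> L' r \<inter> M) \<le> \<rho>" using DM by simp
          moreover have "\<rho> < nu (D \<inter> L' r)" using r unfolding G_def by simp
          ultimately show ?thesis using eq by (simp add: less_max_iff_disj not_le[symmetric])
        qed
        have Qc: "a \<le> c x" if x: "x \<in> Q r" for x r
          unfolding c_def
        proof (rule Inf_greatest)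
          fix y assume "y \<in> qv ` {r. x \<in> L' r}"
          then obtain s where s: "x \<in> L' s" "y = qv s" by blast
          have "\<not> qv s < a" using s(1) x unfolding Q_def M_def by blast
          then show "a \<le> y" using s(2) by simp
        qed
        define y0 where "y0 = tau (Q r0)"
        have ay: "odot a y0 \<le> R D"
        proof (rule left_bound1[OF pm a0])
          fix t :: ennreal assume t: "t < a" "0 < t"
          have sub: "Q r0 \<subseteq> D \<inter> {x\<in>E. t < c x}"
          proof
            fix x assume x: "x \<in> Q r0"
            then have "x \<in> D" unfolding Q_def by blast
            moreover then have "x \<in> E" using sB_sub[OF sa D(1)] by blast
            moreover have "t < c x" using Qc[OF x] t(1) by simp
            ultimately show "x \<in> D \<inter> {x\<in>E. t < c x}" by simp
          qed
          have "odot t y0 \<le> odot t (tau (D \<inter> {x\<in>E. t < c x}))" unfolding y0_def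
            by (intro pm_mono2[OF pm] mx_mono[OF sa mt QB] sub sB_Int[OF sa D(1) cB])
          also have "\<dots> \<le> R D" by (rule R_ge) (use t a_top in simp)
          finally show "odot t y0 \<le> R D" .
        qed
        then have ay': "odot a y0 < \<rho>" using \<rho>(1) by simp
        have "((\<lambda>s. odot s y0) \<longlongrightarrow> odot a y0) (at a)"
          using pm_cont1[OF pm a0] by (simp add: isCont_def)
        then have "((\<lambda>s. odot s y0) \<longlongrightarrow> odot a y0) (at_right a)"
          by (rule tendsto_within_subset) simp
        from order_tendstoD(2)[OF this ay'] have "eventually (\<lambda>s. odot s y0 < \<rho>) (at_right a)" .
        then have "\<exists>b>a. \<forall>s>a. s < b \<longrightarrow> odot s y0 < \<rho>"
          by (subst (asm) eventually_at_right[OF a_top])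
        then obtain b where b: "a < b" "\<And>s. a < s \<Longrightarrow> s < b \<Longrightarrow> odot s y0 < \<rho>"
          by blast
        have "\<exists>r\<in>G. r \<le> r0 \<and> odot (qv r) y0 < \<rho>"
        proof (cases "qv r0 = a")
          case True then show ?thesis using r0 ay' by auto
        next
          case False
          then have "a < qv r0" using a_le[OF r0] by simp
          then have "Inf (qv ` G) < min b (qv r0)" using b(1) unfolding a_def by simp
          then obtain r where r: "r \<in> G" "qv r < min b (qv r0)" unfolding Inf_less_iff by blast
          have "r \<le> r0" using qvl[of r r0] r(2) by simp
          moreover have "odot (qv r) y0 < \<rho>"
          proof (cases "qv r = a")
            case True then show ?thesis using ay' by simp
          next
            case False
            then have "a < qv r" using a_le[OF r(1)] by simp
            then show ?thesis using b(2) r(2) by simp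
          qed
          ultimately show ?thesis using r(1) by blast
        qed
        then obtain r where r: "r \<in> G" "r \<le> r0" "odot (qv r) y0 < \<rho>" by blast
        have QQ: "Q r \<subseteq> Q r0" unfolding Q_def using L'm[OF r(2)] by blast
        have "\<rho> < nu (Q r)" by (rule Qgt[OF r(1)])
        also have "\<dots> \<le> odot (qv r) (tau (Q r))" by (rule L'i[OF QB]) (auto simp: Q_def)
        also have "\<dots> \<le> odot (qv r) y0" unfolding y0_def
          by (intro pm_mono2[OF pm] mx_mono[OF sa mt QB QB] QQ)
        finally show False using r(3) by simp
      qed
    qed
  qed
  have step5: "nu A \<le> R A" if A: "A \<in> B" for A
  proof -
    obtain F where F: "countable F" "F \<subseteq> B" "\<Union>F = E" "\<And>X. X \<in> F \<Longrightarrow> odot_finite odot (tau X)"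
      using sf unfolding sigma_odot_finite_def by blast
    have Aeq: "A = (\<Union>X\<in>F. A \<inter> X)" using sB_sub[OF sa A] F(3) by blast
    have "nu A = nu (\<Union>X\<in>F. A \<inter> X)" using Aeq by (rule arg_cong)
    also have "\<dots> = (SUP X\<in>F. nu (A \<inter> X))"
      by (rule mx_UN[OF sa mn]) (use F(1,2) sB_Int[OF sa A] in auto)
    also have "\<dots> \<le> R A"
    proof (rule SUP_least)
      fix X assume X: "X \<in> F"
      then have XB: "X \<in> B" using F(2) by blast
      have AXB: "A \<inter> X \<in> B" by (rule sB_Int[OF sa A XB])
      have "odot_finite odot (tau (A \<inter> X))"
        by (rule fin_down[OF pm F(4)[OF X]]) (rule mx_mono[OF sa mt AXB XB], blast)
      then have "nu (A \<inter> X) \<le> R (A \<inter> X)" by (rule step5a[OF AXB])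
      also have "\<dots> \<le> R A" by (rule R_mono[OF AXB A]) blast
      finally show "nu (A \<inter> X) \<le> R A" .
    qed
    finally show ?thesis .
  qed
  show ?thesis unfolding has_density_def
  proof (intro exI conjI ballI)
    show "B_measurable E B c" by (rule meas)
    fix A assume "A \<in> B"
    then show "nu A = idem_integral odot E c tau A"
      using step4 step5 unfolding R_def by (metis antisym)
  qed
qed




lemma min_Sup_ennreal: "min (a::ennreal) (Sup X) = Sup ((\<lambda>x. min a x) ` X)"
proof (cases "Sup X \<le> a")
  case True
  then have "\<And>x. x \<in> X \<Longrightarrow> min a x = x" using Sup_upper by (metis min.absorb2 order_trans)
  then have "(\<lambda>x. min a x) ` X = X" by (simp add: image_cong)
  then show ?thesis using True by simp
next
  case False
  then have "a < Sup X" by simp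
  then obtain x where x: "x \<in> X" "a < x" unfolding less_Sup_iff by blast
  have "a \<le> Sup ((\<lambda>x. min a x) ` X)" using x by (intro SUP_upper2[OF x(1)]) simp
  moreover have "Sup ((\<lambda>x. min a x) ` X) \<le> a" by (rule SUP_least) simp
  ultimately show ?thesis using False by simp
qed

lemma fin_from:
  assumes pm: "pseudo_mult odot one" and t: "0 < t" and le: "odot t y \<le> u"
    and u: "odot_finite odot u"
  shows "odot_finite odot y"
proof -
  have "O_odot odot y \<le> O_odot odot u"
    unfolding O_odot_def
  proof (rule INF_greatest)
    fix s :: ennreal assume s: "s \<in> {0<..}"
    have "odot s t \<noteq> 0" using pm_nz[OF pm, of s t] s t by auto
    then have "(INF s\<in>{0<..}. odot s y) \<le> odot (odot s t) y" by (intro INF_lower) (simp add: zero_less_iff_neq_zero)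
    also have "\<dots> = odot s (odot t y)" by (rule pm_assoc[OF pm])
    also have "\<dots> \<le> odot s u" by (rule pm_mono2[OF pm le])
    finally show "(INF s\<in>{0<..}. odot s y) \<le> odot s u" .
  qed
  then show ?thesis using u unfolding odot_finite_def by simp
qed

lemma rn_fin:
  assumes pm: "pseudo_mult odot one" and nd: "non_degenerate odot one"
    and sa: "sigma_algebra E B" and mt: "sigma_maxitive B tau"
    and rn: "radon_nikodym_property odot E B tau"
  shows "sigma_odot_finite odot E B tau"
proof -
  define nu where "nu A = min one (tau A)" for A
  have mn: "sigma_maxitive B nu" unfolding sigma_maxitive_def
  proof (intro conjI allI impI)
    show "nu {} = 0" unfolding nu_def using mx_empty[OF sa mt] by simp
    fix F assume F: "countable F \<and> F \<subseteq> B"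
    have "nu (\<Union>F) = min one (Sup (tau ` F))" unfolding nu_def using mx_Sup[OF sa mt] F by simp
    also have "\<dots> = Sup ((\<lambda>x. min one x) ` (tau ` F))" by (rule min_Sup_ennreal)
    also have "\<dots> = Sup (nu ` F)" unfolding nu_def by (simp add: image_comp)
    finally show "nu (\<Union>F) = Sup (nu ` F)" .
  qed
  have ac: "odot_abs_cont odot B nu tau" unfolding odot_abs_cont_def
  proof (intro ballI impI)
    fix A assume "A \<in> B"
    have "nu A \<le> tau A" unfolding nu_def by simp
    also have "\<dots> \<le> odot top (tau A)" by (rule top_mult_ge[OF pm])
    finally show "nu A \<le> odot top (tau A)" .
  qed
  obtain c where c: "B_measurable E B c" "\<And>A. A \<in> B \<Longrightarrow> nu A = idem_integral odot E c tau A"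
    using rn mn ac unfolding radon_nikodym_property_def has_density_def by blast
  have cB: "t < top \<Longrightarrow> {x\<in>E. t < c x} \<in> B" for t using c(1) unfolding B_measurable_def by blast
  define Z where "Z = E - {x\<in>E. 0 < c x}"
  have ZB: "Z \<in> B" unfolding Z_def by (rule sB_Diff[OF sa sB_top[OF sa] cB]) simp
  have "nu Z = idem_integral odot E c tau Z" by (rule c(2)[OF ZB])
  also have "\<dots> = 0" unfolding idem_integral_def
  proof (rule antisym[OF SUP_least])
    fix t :: ennreal assume "t \<in> {t. t < top}"
    have "Z \<inter> {x\<in>E. t < c x} = {}" unfolding Z_def using order_le_less_trans[OF zero_le] by blast
    then show "odot t (tau (Z \<inter> {x\<in>E. t < c x})) \<le> 0" using mx_empty[OF sa mt] pm_zero2[OF pm] by simp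
  qed simp
  finally have "tau Z = 0" unfolding nu_def using one_pos[OF pm] by (simp add: min_def split: if_splits)
  define F where "F = insert Z ((\<lambda>r. {x\<in>E. ennreal (real_of_rat r) < c x}) ` {r. 0 < r})"
  show ?thesis unfolding sigma_odot_finite_def
  proof (intro exI conjI)
    show "countable F" unfolding F_def by (auto intro: countableI_type)
    show "F \<subseteq> B" unfolding F_def using ZB cB by auto
    show "\<Union>F = E"
    proof
      show "\<Union>F \<subseteq> E" unfolding F_def Z_def by auto
      show "E \<subseteq> \<Union>F"
      proof
        fix x assume x: "x \<in> E"
        show "x \<in> \<Union>F"
        proof (cases "0 < c x")
          case True
          then obtain r where r: "0 < ennreal (real_of_rat r)" "ennreal (real_of_rat r) < c x"
            using ennreal_rat_dense by blast
          have "0 < r" using r(1) by simp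
          then show ?thesis using x r(2) unfolding F_def by blast
        next
          case False then show ?thesis using x unfolding F_def Z_def by blast
        qed
      qed
    qed
    show "\<forall>A\<in>F. odot_finite odot (tau A)"
    proof
      fix A assume "A \<in> F"
      then consider "A = Z" | r where "0 < r" "A = {x\<in>E. ennreal (real_of_rat r) < c x}"
        unfolding F_def by blast
      then show "odot_finite odot (tau A)"
      proof cases
        case 1 then show ?thesis using \<open>tau Z = 0\<close> fin_zero[OF pm] by simp
      next
        case (2 r)
        define t where "t = ennreal (real_of_rat r)"
        have t0: "0 < t" unfolding t_def using 2(1) by simp
        have tt: "t < top" unfolding t_def by simp
        have AB: "A \<in> B" using 2(2) cB[OF tt] unfolding t_def by simp
        have "A \<inter> {x\<in>E. t < c x} = A" using 2(2) unfolding t_def by blast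
        then have "odot t (tau A) \<le> idem_integral odot E c tau A"
          unfolding idem_integral_def using tt by (metis (no_types, lifting) SUP_upper mem_Collect_eq)
        also have "\<dots> = nu A" by (rule c(2)[OF AB, symmetric])
        also have "\<dots> \<le> one" unfolding nu_def by simp
        finally show ?thesis
          using fin_from[OF pm t0] nd unfolding non_degenerate_def by blast
      qed
    qed
  qed
qed




lemma rn_princ:
  assumes pm: "pseudo_mult odot one"
    and sa: "sigma_algebra E B" and mt: "sigma_maxitive B tau"
    and rn: "radon_nikodym_property odot E B tau"
  shows "sigma_principal B tau"
  unfolding sigma_principal_def
proof (intro allI impI)
  fix I assume I: "sigma_ideal B I"
  have IB: "I \<subseteq> B" and Ine: "I \<noteq> {}" using I unfolding sigma_ideal_def by auto
  have Iun: "countable F \<Longrightarrow> F \<subseteq> I \<Longrightarrow> \<Union>F \<in> I" for F using I unfolding sigma_ideal_def by blast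
  have Idown: "A \<in> B \<Longrightarrow> S \<in> I \<Longrightarrow> A \<subseteq> S \<Longrightarrow> A \<in> I" for A S using I unfolding sigma_ideal_def by blast
  have Iempty: "{} \<in> I" using Ine Idown sB_empty[OF sa] by blast
  define mu where "mu A = Inf ((\<lambda>S. tau (A - S)) ` I)" for A
  have attain: "\<exists>S\<in>I. tau (A - S) = mu A" if A: "A \<in> B" for A
  proof -
    define Y where "Y = (\<lambda>S. tau (A - S)) ` I"
    have "Y \<noteq> {}" unfolding Y_def using Ine by blast
    from ennreal_Inf_countable_INF[OF this] obtain f :: "nat \<Rightarrow> ennreal" where
      fc: "antimono_on UNIV f \<and> range f \<subseteq> Y \<and> Inf Y = Inf (range f)" by fast
    have f1: "range f \<subseteq> Y" by (rule conjunct1[OF conjunct2[OF fc]])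
    have f2: "Inf Y = Inf (range f)" by (rule conjunct2[OF conjunct2[OF fc]])
    have fa: "range f \<subseteq> (\<lambda>S. tau (A - S)) ` I" using f1 unfolding Y_def .
    have fb: "mu A = Inf (range f)" using f2 unfolding Y_def mu_def .
    note f = fa fb
    have "\<forall>n. \<exists>S. S \<in> I \<and> f n = tau (A - S)" using f(1) by blast
    then have "\<exists>S. \<forall>n. S n \<in> I \<and> f n = tau (A - S n)" by (rule choice)
    then obtain S where S: "\<And>n. S n \<in> I" "\<And>n. f n = tau (A - S n)" by blast
    define S0 where "S0 = \<Union>(range S)"
    have S0I: "S0 \<in> I" unfolding S0_def by (rule Iun) (use S(1) in auto)
    have S0B: "S0 \<in> B" using S0I IB by blast
    have "tau (A - S0) \<le> mu A" unfolding f(2)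
    proof (rule INF_greatest)
      fix n
      have "S n \<in> B" using S(1) IB by blast
      have "tau (A - S0) \<le> tau (A - S n)"
        by (rule mx_mono[OF sa mt sB_Diff[OF sa A S0B] sB_Diff[OF sa A \<open>S n \<in> B\<close>]]) (auto simp: S0_def)
      then show "tau (A - S0) \<le> f n" using S(2) by simp
    qed
    moreover have "mu A \<le> tau (A - S0)" unfolding mu_def by (rule INF_lower[OF S0I])
    ultimately have "tau (A - S0) = mu A" by (rule antisym)
    then show ?thesis by (rule bexI[OF _ S0I])
  qed
  have mu_le: "mu A \<le> tau (A - S)" if "S \<in> I" for A S unfolding mu_def by (rule INF_lower[OF that])
  have mn: "sigma_maxitive B mu" unfolding sigma_maxitive_def
  proof (intro conjI allI impI)
    show "mu {} = 0" using mu_le[OF Iempty, of "{}"] mx_empty[OF sa mt] by simp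
    fix F assume F: "countable F \<and> F \<subseteq> B"
    show "mu (\<Union>F) = Sup (mu ` F)"
    proof (rule antisym)
      have "\<forall>A\<in>F. \<exists>S\<in>I. tau (A - S) = mu A" using attain F by blast
      then have "\<exists>g. \<forall>A\<in>F. g A \<in> I \<and> tau (A - g A) = mu A" using bchoice[of F "\<lambda>A S. S \<in> I \<and> tau (A - S) = mu A"] by blast
      then obtain g where g: "\<And>A. A \<in> F \<Longrightarrow> g A \<in> I" "\<And>A. A \<in> F \<Longrightarrow> tau (A - g A) = mu A"
        by blast
      define S where "S = \<Union>(g ` F)"
      have SI: "S \<in> I" unfolding S_def by (rule Iun) (use F g(1) in auto)
      have SB: "S \<in> B" using SI IB by blast
      have Feq: "\<Union>F - S = (\<Union>A\<in>F. A - S)" by blast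
      have "mu (\<Union>F) \<le> tau (\<Union>F - S)" by (rule mu_le[OF SI])
      also have "tau (\<Union>F - S) = tau (\<Union>A\<in>F. A - S)" using Feq by (rule arg_cong)
      also have "\<dots> = (SUP A\<in>F. tau (A - S))"
        by (rule mx_UN[OF sa mt]) (use F sB_Diff[OF sa _ SB] in auto)
      also have "\<dots> \<le> Sup (mu ` F)"
      proof (rule SUP_mono)
        fix A assume A: "A \<in> F"
        have AB: "A \<in> B" using A F by blast
        have gB: "g A \<in> B" using g(1)[OF A] IB by blast
        have "tau (A - S) \<le> tau (A - g A)"
          by (rule mx_mono[OF sa mt sB_Diff[OF sa AB SB] sB_Diff[OF sa AB gB]]) (use A in \<open>auto simp: S_def\<close>)
        then show "\<exists>A'\<in>F. tau (A - S) \<le> mu A'" using g(2)[OF A] A by metis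
      qed
      finally show "mu (\<Union>F) \<le> Sup (mu ` F)" .
    next
      show "Sup (mu ` F) \<le> mu (\<Union>F)"
      proof (rule SUP_least)
        fix A assume A: "A \<in> F"
        show "mu A \<le> mu (\<Union>F)" unfolding mu_def
        proof (rule INF_mono)
          fix S assume S: "S \<in> I"
          have SB: "S \<in> B" using S IB by blast
          have AB: "A \<in> B" using A F by blast
          have UB: "\<Union>F \<in> B" using F sB_Union[OF sa] by blast
          have "tau (A - S) \<le> tau (\<Union>F - S)"
            by (rule mx_mono[OF sa mt sB_Diff[OF sa AB SB] sB_Diff[OF sa UB SB]]) (use A in blast)
          then show "\<exists>S'\<in>I. tau (A - S') \<le> tau (\<Union>F - S)" using S by blast
        qed
      qed
    qed
  qed
  have ac: "odot_abs_cont odot B mu tau" unfolding odot_abs_cont_def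
  proof (intro ballI impI)
    fix A assume "A \<in> B"
    have "mu A \<le> tau (A - {})" by (rule mu_le[OF Iempty])
    also have "\<dots> \<le> odot top (tau A)" using top_mult_ge[OF pm] by simp
    finally show "mu A \<le> odot top (tau A)" .
  qed
  obtain c where c: "B_measurable E B c" "\<And>A. A \<in> B \<Longrightarrow> mu A = idem_integral odot E c tau A"
    using rn mn ac unfolding radon_nikodym_property_def has_density_def by blast
  have cB: "t < top \<Longrightarrow> {x\<in>E. t < c x} \<in> B" for t using c(1) unfolding B_measurable_def by blast
  define P where "P = {x\<in>E. 0 < c x}"
  have PB: "P \<in> B" unfolding P_def by (rule cB) simp
  define Z where "Z = E - P"
  have ZB: "Z \<in> B" unfolding Z_def by (rule sB_Diff[OF sa sB_top[OF sa] PB])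
  have "mu Z = idem_integral odot E c tau Z" by (rule c(2)[OF ZB])
  also have "\<dots> = 0" unfolding idem_integral_def
  proof (rule antisym[OF SUP_least])
    fix t :: ennreal assume "t \<in> {t. t < top}"
    have "Z \<inter> {x\<in>E. t < c x} = {}" unfolding Z_def P_def using order_le_less_trans[OF zero_le] by blast
    then show "odot t (tau (Z \<inter> {x\<in>E. t < c x})) \<le> 0" using mx_empty[OF sa mt] pm_zero2[OF pm] by simp
  qed simp
  finally have muZ: "mu Z = 0" .
  obtain S0 where S0: "S0 \<in> I" "tau (Z - S0) = 0" using attain[OF ZB] muZ by auto
  have S0B: "S0 \<in> B" using S0(1) IB by blast
  have SP: "tau (S \<inter> P) = 0" if S: "S \<in> I" for S
  proof -
    have SB: "S \<in> B" using S IB by blast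
    have muS: "mu S = 0" using mu_le[OF S, of S] mx_empty[OF sa mt] by simp
    have each: "tau (S \<inter> {x\<in>E. ennreal (real_of_rat r) < c x}) = 0" if r: "0 < r" for r
    proof -
      define t where "t = ennreal (real_of_rat r)"
      have t0: "t \<noteq> 0" unfolding t_def using r by simp
      have tt: "t < top" unfolding t_def by simp
      have "odot t (tau (S \<inter> {x\<in>E. t < c x})) \<le> idem_integral odot E c tau S"
        unfolding idem_integral_def by (rule SUP_upper) (use tt in simp)
      also have "\<dots> = 0" using c(2)[OF SB] muS by simp
      finally have "odot t (tau (S \<inter> {x\<in>E. t < c x})) = 0" by simp
      then show ?thesis using pm_nz[OF pm] t0 unfolding t_def by blast
    qed
    have Peq: "S \<inter> P = (\<Union>r\<in>{r. 0 < r}. S \<inter> {x\<in>E. ennreal (real_of_rat r) < c x})"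
    proof
      show "S \<inter> P \<subseteq> (\<Union>r\<in>{r. 0 < r}. S \<inter> {x\<in>E. ennreal (real_of_rat r) < c x})"
      proof
        fix x assume x: "x \<in> S \<inter> P"
        then have "0 < c x" "x \<in> E" unfolding P_def by auto
        then obtain r where r: "0 < ennreal (real_of_rat r)" "ennreal (real_of_rat r) < c x"
          using ennreal_rat_dense by blast
        have "0 < r" using r(1) by simp
        then show "x \<in> (\<Union>r\<in>{r. 0 < r}. S \<inter> {x\<in>E. ennreal (real_of_rat r) < c x})"
          using x r(2) \<open>x \<in> E\<close> by blast
      qed
      show "(\<Union>r\<in>{r. 0 < r}. S \<inter> {x\<in>E. ennreal (real_of_rat r) < c x}) \<subseteq> S \<inter> P"
        unfolding P_def using order_le_less_trans[OF zero_le] by blast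
    qed
    have "tau (S \<inter> P) = tau (\<Union>r\<in>{r. 0 < r}. S \<inter> {x\<in>E. ennreal (real_of_rat r) < c x})"
      using Peq by (rule arg_cong)
    also have "\<dots> = (SUP r\<in>{r. 0 < r}. tau (S \<inter> {x\<in>E. ennreal (real_of_rat r) < c x}))"
      by (rule mx_UN[OF sa mt]) (auto intro: countableI_type sB_Int[OF sa SB cB])
    also have "\<dots> = 0" using each by (intro antisym SUP_least) auto
    finally show ?thesis .
  qed
  define L where "L = Z \<inter> S0"
  have LI: "L \<in> I" unfolding L_def by (rule Idown[OF sB_Int[OF sa ZB S0B] S0(1)]) blast
  show "\<exists>L\<in>I. \<forall>S\<in>I. negligible B tau (S - L)"
  proof (intro bexI[OF _ LI] ballI)
    fix S assume S: "S \<in> I"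
    have SB: "S \<in> B" using S IB by blast
    define N where "N = (S \<inter> P) \<union> (Z - S0)"
    have NB: "N \<in> B" unfolding N_def by (intro sB_Un[OF sa] sB_Int[OF sa SB PB] sB_Diff[OF sa ZB S0B])
    have "tau N = max (tau (S \<inter> P)) (tau (Z - S0))"
      unfolding N_def by (rule mx_Un[OF sa mt sB_Int[OF sa SB PB] sB_Diff[OF sa ZB S0B]])
    then have "tau N = 0" using SP[OF S] S0(2) by simp
    moreover have "S - L \<subseteq> N" unfolding N_def L_def Z_def using sB_sub[OF sa SB] by blast
    ultimately show "negligible B tau (S - L)" unfolding negligible_def using NB by blast
  qed
qed

theorem mainTheorem1:
  fixes odot :: "ennreal \<Rightarrow> ennreal \<Rightarrow> ennreal" and one :: ennreal
    and E :: "'a set" and B :: "'a set set" and tau :: "'a set \<Rightarrow> ennreal"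
  assumes "pseudo_mult odot one" and "non_degenerate odot one"
    and "E \<noteq> {}" and "sigma_algebra E B" and "sigma_maxitive B tau"
  shows "radon_nikodym_property odot E B tau \<longleftrightarrow>
           sigma_odot_finite odot E B tau \<and> sigma_principal B tau"
proof
  assume rn: "radon_nikodym_property odot E B tau"
  show "sigma_odot_finite odot E B tau \<and> sigma_principal B tau"
    using rn_fin[OF assms(1,2,4,5) rn] rn_princ[OF assms(1,4,5) rn] by blast
next
  assume h: "sigma_odot_finite odot E B tau \<and> sigma_principal B tau"
  show "radon_nikodym_property odot E B tau" unfolding radon_nikodym_property_def
    using rn_suff[OF assms(1,4,5)] h by blast
qed



end
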